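(* For every positive integer $n$, $|S_n(T\cup\{\tau\})|=n$ in the following cases: (1) $T=\{123,132,231\}$ and $\tau\in S_4$ contains at least one permutation in $T$; (2) $T=\{123,132,213\}$ and $\tau=3412$.
   Context: Permutations are written in one-line notation. A permutation $\sigma\in S_n$ contains $\pi\in S_m$ if there are indices $i_1<\dots<i_m$ such that for all $j<l$, $\sigma_{i_j}<\sigma_{i_l}$ iff $\pi_j<\pi_l$; otherwise $\sigma$ avoids $\pi$. For a set $A$ of patterns, $S_n(A)$ is the set of permutations in $S_n$ avoiding every pattern in $A$. *)

theory Defs
  imports Main
begin

definition is_perm :: "nat \<Rightarrow> nat list \<Rightarrow> bool" where
  "is_perm n \<sigma> \<longleftrightarrow> length \<sigma> = n \<and> distinct \<sigma> \<and> set \<sigma> = {1..n}"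

definition contains :: "nat list \<Rightarrow> nat list \<Rightarrow> bool" where
  "contains \<sigma> \<pi> \<longleftrightarrow> (\<exists>is. length is = length \<pi> \<and> sorted_wrt (<) is \<and>
      (\<forall>i\<in>set is. i < length \<sigma>) \<and>
      (\<forall>j l. j < l \<longrightarrow> l < length \<pi> \<longrightarrow>
          (\<sigma> ! (is ! j) < \<sigma> ! (is ! l) \<longleftrightarrow> \<pi> ! j < \<pi> ! l)))"

definition avoids :: "nat list \<Rightarrow> nat list \<Rightarrow> bool" where
  "avoids \<sigma> \<pi> \<longleftrightarrow> \<not> contains \<sigma> \<pi>"

definition Av :: "nat \<Rightarrow> nat list set \<Rightarrow> nat list set" where
  "Av n A = {\<sigma>. is_perm n \<sigma> \<and> (\<forall>\<pi>\<in>A. avoids \<sigma> \<pi>)}"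

end

theory Submission imports Defs begin

lemma contains_Cons: "contains \<sigma> \<pi> \<Longrightarrow> contains (x#\<sigma>) \<pi>"
  unfolding contains_def
proof (elim exE conjE)
  fix "is" assume h: "length is = length \<pi>" "sorted_wrt (<) is" "\<forall>i\<in>set is. i < length \<sigma>"
    "\<forall>j l. j < l \<longrightarrow> l < length \<pi> \<longrightarrow> (\<sigma> ! (is ! j) < \<sigma> ! (is ! l)) = (\<pi> ! j < \<pi> ! l)"
  show "\<exists>is. length is = length \<pi> \<and> sorted_wrt (<) is \<and> (\<forall>i\<in>set is. i < length (x # \<sigma>)) \<and>
        (\<forall>j l. j < l \<longrightarrow> l < length \<pi> \<longrightarrow> ((x # \<sigma>) ! (is ! j) < (x # \<sigma>) ! (is ! l)) = (\<pi> ! j < \<pi> ! l))"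
    apply (rule exI[of _ "map Suc is"])
    using h by (auto simp: sorted_wrt_map)
qed

lemma contains_Cons_max:
  assumes "\<forall>y\<in>set \<sigma>. y < x" "0 < l" "l < length \<pi>" "\<pi>!0 < \<pi>!l" "contains (x#\<sigma>) \<pi>"
  shows "contains \<sigma> \<pi>"
proof -
  obtain "is" where h: "length is = length \<pi>" "sorted_wrt (<) is" "\<forall>i\<in>set is. i < length (x#\<sigma>)"
    "\<forall>j l. j < l \<longrightarrow> l < length \<pi> \<longrightarrow> ((x#\<sigma>) ! (is ! j) < (x#\<sigma>) ! (is ! l)) = (\<pi> ! j < \<pi> ! l)"
    using assms(5) unfolding contains_def by blast
  have lt: "is!0 < is!l" using h(1,2) assms(2,3) sorted_wrt_nth_less by fastforce
  have "is!l \<in> set is" using h(1) assms(3) by auto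
  hence il: "is!l < Suc (length \<sigma>)" using h(3) by auto
  have i0: "is!0 \<noteq> 0"
  proof
    assume z: "is!0 = 0"
    have "(x#\<sigma>)!(is!l) = \<sigma>!(is!l - 1)" using lt z by (simp add: nth_Cons')
    moreover have "\<sigma>!(is!l - 1) \<in> set \<sigma>" using il lt z by auto
    ultimately have "(x#\<sigma>)!(is!l) < x" using assms(1) by auto
    moreover have "(x#\<sigma>)!(is!0) < (x#\<sigma>)!(is!l)" using h(4) assms(2,3,4) by blast
    ultimately show False using z by simp
  qed
  have ge: "\<forall>i\<in>set is. 1 \<le> i"
  proof
    fix i assume "i \<in> set is"
    then obtain k where k: "k < length is" "i = is!k" by (auto simp: in_set_conv_nth)
    show "1 \<le> i"
    proof (cases k)
      case 0 thus ?thesis using i0 k by simp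
    next
      case (Suc m) thus ?thesis using k h(2) sorted_wrt_nth_less[of "(<)" "is" 0 k] i0 by auto
    qed
  qed
  show ?thesis unfolding contains_def
  proof (rule exI[of _ "map (\<lambda>i. i - 1) is"], intro conjI)
    show "length (map (\<lambda>i. i - 1) is) = length \<pi>" using h by simp
    show "sorted_wrt (<) (map (\<lambda>i. i - 1) is)"
      unfolding sorted_wrt_map
      by (rule sorted_wrt_mono_rel[OF _ h(2)]) (use ge in force)
    show "\<forall>i\<in>set (map (\<lambda>i. i - 1) is). i < length \<sigma>" using h(3) ge by force
    show "\<forall>j l. j < l \<longrightarrow> l < length \<pi> \<longrightarrow> (\<sigma> ! (map (\<lambda>i. i - 1) is ! j) < \<sigma> ! (map (\<lambda>i. i - 1) is ! l)) = (\<pi> ! j < \<pi> ! l)"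
    proof (intro allI impI)
      fix j l assume jl: "j < l" "l < length \<pi>"
      have "is!j \<in> set is" "is!l \<in> set is" using jl h(1) by auto
      hence "1 \<le> is!j" "1 \<le> is!l" using ge by auto
      hence "(x#\<sigma>)!(is!j) = \<sigma>!(is!j - 1)" "(x#\<sigma>)!(is!l) = \<sigma>!(is!l - 1)" by (auto simp: nth_Cons')
      show "(\<sigma> ! (map (\<lambda>i. i - 1) is ! j) < \<sigma> ! (map (\<lambda>i. i - 1) is ! l)) = (\<pi> ! j < \<pi> ! l)"
      proof -
        have "((x#\<sigma>)!(is!j) < (x#\<sigma>)!(is!l)) = (\<pi>!j < \<pi>!l)" using h(4) jl by blast
        thus ?thesis using \<open>(x#\<sigma>)!(is!j) = \<sigma>!(is!j - 1)\<close> \<open>(x#\<sigma>)!(is!l) = \<sigma>!(is!l - 1)\<close> jl h(1) by simp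
      qed
    qed
  qed
qed

lemma contains_trans:
  assumes "contains \<sigma> \<tau>" "contains \<tau> \<pi>" shows "contains \<sigma> \<pi>"
proof -
  obtain js where j: "length js = length \<tau>" "sorted_wrt (<) js" "\<forall>i\<in>set js. i < length \<sigma>"
    "\<forall>j l. j < l \<longrightarrow> l < length \<tau> \<longrightarrow> (\<sigma> ! (js ! j) < \<sigma> ! (js ! l)) = (\<tau> ! j < \<tau> ! l)"
    using assms(1) unfolding contains_def by blast
  obtain ks where k: "length ks = length \<pi>" "sorted_wrt (<) ks" "\<forall>i\<in>set ks. i < length \<tau>"
    "\<forall>j l. j < l \<longrightarrow> l < length \<pi> \<longrightarrow> (\<tau> ! (ks ! j) < \<tau> ! (ks ! l)) = (\<pi> ! j < \<pi> ! l)"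
    using assms(2) unfolding contains_def by blast
  show ?thesis unfolding contains_def
  proof (rule exI[of _ "map (\<lambda>k. js!k) ks"], intro conjI)
    show "length (map ((!) js) ks) = length \<pi>" using k by simp
    show "sorted_wrt (<) (map ((!) js) ks)"
      unfolding sorted_wrt_map
    proof (rule sorted_wrt_mono_rel[OF _ k(2)])
      fix x y assume "x \<in> set ks" "y \<in> set ks" "x < y"
      hence "y < length js" using k(3) j(1) by auto
      thus "js!x < js!y" using sorted_wrt_nth_less[OF j(2) \<open>x < y\<close>] by blast
    qed
    show "\<forall>i\<in>set (map ((!) js) ks). i < length \<sigma>" using k(3) j(1,3) by auto
    show "\<forall>ja l. ja < l \<longrightarrow> l < length \<pi> \<longrightarrow> (\<sigma> ! (map ((!) js) ks ! ja) < \<sigma> ! (map ((!) js) ks ! l)) = (\<pi> ! ja < \<pi> ! l)"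
    proof (intro allI impI)
      fix a b assume ab: "a < b" "b < length \<pi>"
      have "ks!a < ks!b" using ab k(1,2) sorted_wrt_nth_less by fastforce
      moreover have "ks!b < length \<tau>" using k(1,3) ab by auto
      ultimately have "(\<sigma> ! (js ! (ks!a)) < \<sigma> ! (js ! (ks!b))) = (\<tau> ! (ks!a) < \<tau> ! (ks!b))" using j(4) by blast
      moreover have "(\<tau> ! (ks!a) < \<tau> ! (ks!b)) = (\<pi> ! a < \<pi> ! b)" using k(4) ab by blast
      moreover have "map ((!) js) ks ! a = js ! (ks!a)" "map ((!) js) ks ! b = js ! (ks!b)" using ab k(1) by simp_all
      ultimately show "(\<sigma> ! (map ((!) js) ks ! a) < \<sigma> ! (map ((!) js) ks ! b)) = (\<pi> ! a < \<pi> ! b)"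
        by simp
    qed
  qed
qed

lemma avoid1:
  assumes "\<forall>i j. i<j \<longrightarrow> j<length \<sigma> \<longrightarrow> \<sigma>!i<\<sigma>!j \<longrightarrow> Suc j = length \<sigma>"
    "j<l" "Suc l < length \<pi>" "\<pi>!j<\<pi>!l"
  shows "\<not> contains \<sigma> \<pi>"
proof
  assume "contains \<sigma> \<pi>"
  then obtain "is" where h: "length is = length \<pi>" "sorted_wrt (<) is" "\<forall>i\<in>set is. i < length \<sigma>"
    "\<forall>j l. j < l \<longrightarrow> l < length \<pi> \<longrightarrow> (\<sigma> ! (is ! j) < \<sigma> ! (is ! l)) = (\<pi> ! j < \<pi> ! l)"
    unfolding contains_def by blast
  have a: "is!j < is!l" "is!l < is!(Suc l)" using h(1,2) assms(2,3) sorted_wrt_nth_less by fastforce+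
  have "is!(Suc l) \<in> set is" using h(1) assms(3) by auto
  hence b: "is!(Suc l) < length \<sigma>" using h(3) by auto
  have "\<sigma>!(is!j) < \<sigma>!(is!l)" using h(4) assms(2,3,4) by auto
  hence "Suc (is!l) = length \<sigma>" using assms(1) a b by auto
  thus False using a b by auto
qed

lemma avoid2:
  assumes "\<forall>i j. i<j \<longrightarrow> j<length \<sigma> \<longrightarrow> \<sigma>!i<\<sigma>!j \<longrightarrow> i = 0 \<and> j = 1"
    "j1<l1" "l1 < length \<pi>" "\<pi>!j1<\<pi>!l1"
    "j2<l2" "l2 < length \<pi>" "\<pi>!j2<\<pi>!l2" "(j1,l1) \<noteq> (j2,l2)"
  shows "\<not> contains \<sigma> \<pi>"
proof
  assume "contains \<sigma> \<pi>"
  then obtain "is" where h: "length is = length \<pi>" "sorted_wrt (<) is" "\<forall>i\<in>set is. i < length \<sigma>"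
    "\<forall>j l. j < l \<longrightarrow> l < length \<pi> \<longrightarrow> (\<sigma> ! (is ! j) < \<sigma> ! (is ! l)) = (\<pi> ! j < \<pi> ! l)"
    unfolding contains_def by blast
  have inj: "\<And>a b. a < length is \<Longrightarrow> b < length is \<Longrightarrow> is!a = is!b \<Longrightarrow> a = b"
    using h(2) sorted_wrt_nth_less by (metis linorder_neqE_nat less_irrefl)
  have "is!j1 < is!l1" "is!j2 < is!l2" using h(1,2) assms sorted_wrt_nth_less by fastforce+
  moreover have "is!l1 < length \<sigma>" "is!l2 < length \<sigma>" using h(1,3) assms by auto
  moreover have "\<sigma>!(is!j1) < \<sigma>!(is!l1)" "\<sigma>!(is!j2) < \<sigma>!(is!l2)" using h(4) assms by auto
  ultimately have "is!j1 = 0" "is!l1 = 1" "is!j2 = 0" "is!l2 = 1" using assms(1) by blast+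
  hence "j1 = j2" "l1 = l2" using inj h(1) assms by (metis less_trans)+
  thus False using assms(8) by simp
qed

lemma contains3:
  assumes "i<j" "j<k" "k<length \<sigma>" "length p = 3"
    "\<sigma>!i<\<sigma>!j \<longleftrightarrow> p!0<p!1" "\<sigma>!i<\<sigma>!k \<longleftrightarrow> p!0<p!2" "\<sigma>!j<\<sigma>!k \<longleftrightarrow> p!1<p!2"
  shows "contains \<sigma> p"
  unfolding contains_def
proof (rule exI[of _ "[i,j,k]"], intro conjI allI impI)
  fix a b assume ab: "a < b" "b < length p"
  hence "(a = 0 \<and> b = 1) \<or> (a = 0 \<and> b = 2) \<or> (a = 1 \<and> b = 2)" using assms(4) by arith
  thus "(\<sigma> ! ([i, j, k] ! a) < \<sigma> ! ([i, j, k] ! b)) = (p ! a < p ! b)"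
    using assms(5-7) by (elim disjE) simp_all
qed (use assms in auto)

lemma contains4:
  assumes "i<j" "j<k" "k<m" "m<length \<sigma>" "length p = 4"
    "\<sigma>!i<\<sigma>!j \<longleftrightarrow> p!0<p!1" "\<sigma>!i<\<sigma>!k \<longleftrightarrow> p!0<p!2" "\<sigma>!j<\<sigma>!k \<longleftrightarrow> p!1<p!2"
    "\<sigma>!i<\<sigma>!m \<longleftrightarrow> p!0<p!3" "\<sigma>!j<\<sigma>!m \<longleftrightarrow> p!1<p!3" "\<sigma>!k<\<sigma>!m \<longleftrightarrow> p!2<p!3"
  shows "contains \<sigma> p"
  unfolding contains_def
proof (rule exI[of _ "[i,j,k,m]"], intro conjI allI impI)
  fix a b assume ab: "a < b" "b < length p"
  let ?g = "(\<sigma> ! ([i, j, k, m] ! a) < \<sigma> ! ([i, j, k, m] ! b)) = (p ! a < p ! b)"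
  have "b = 1 \<or> b = 2 \<or> b = 3" using ab assms(5) by linarith
  then show ?g
  proof (elim disjE)
    assume b: "b = 1" hence "a = 0" using ab by linarith
    thus ?g using b assms(6) by simp
  next
    assume b: "b = 2" hence "a = 0 \<or> a = 1" using ab by linarith
    thus ?g
    proof
      assume "a = 0" thus ?g using b assms(7) by simp
    next
      assume "a = 1" thus ?g using b assms(8) by simp
    qed
  next
    assume b: "b = 3" hence "a = 0 \<or> a = 1 \<or> a = 2" using ab by linarith
    thus ?g
    proof (elim disjE)
      assume "a = 0" thus ?g using b assms(9) by simp
    next
      assume "a = 1" thus ?g using b assms(10) by simp
    next
      assume "a = 2" thus ?g using b assms(11) by simp
    qed
  qed
qed (use assms in auto)


lemma perm_Cons: "is_perm (Suc n) (Suc n # vs) \<Longrightarrow> is_perm n vs"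
proof -
  assume h: "is_perm (Suc n) (Suc n # vs)"
  hence d: "distinct (Suc n # vs)" "length vs = n" "set (Suc n # vs) = {1..Suc n}" unfolding is_perm_def by simp_all
  have "set vs = set (Suc n # vs) - {Suc n}" using d(1) by auto
  also have "\<dots> = {1..Suc n} - {Suc n}" using d(3) by simp
  also have "\<dots> = {1..n}" by auto
  finally show ?thesis using d unfolding is_perm_def by simp
qed

lemma sorted_desc_unique:
  assumes "sorted_wrt (>) xs" "set xs = {1..m}" shows "xs = rev [1..<Suc m]"
proof -
  have "sorted_wrt (<) (rev xs)" using assms(1) by (simp add: sorted_wrt_rev)
  hence "sorted (rev xs)" "distinct (rev xs)" by (auto simp: strict_sorted_iff)
  moreover have "set (rev xs) = set [1..<Suc m]"
    unfolding set_rev set_upt assms(2) atLeastLessThanSuc_atLeastAtMost ..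
  moreover have "sorted [1..<Suc m]" "distinct [1..<Suc m]" by (rule sorted_upt, rule distinct_upt)
  ultimately show ?thesis
    using sorted_distinct_set_unique[of "rev xs" "[1..<Suc m]"] by (metis rev_rev_ident)
qed

lemma desc_sorted: "sorted_wrt (>) (rev [1..<Suc m])"
proof -
  have "sorted_wrt (<) [1..<Suc m]" by (rule sorted_wrt_upt)
  thus ?thesis by (simp add: sorted_wrt_rev del: upt_Suc)
qed

lemma asc_D:
  fixes xs :: "nat list"
  assumes "sorted_wrt (>) xs"
  shows "\<forall>i j. i<j \<longrightarrow> j<length (xs@[m]) \<longrightarrow> (xs@[m])!i < (xs@[m])!j \<longrightarrow> Suc j = length (xs@[m])"
proof (intro allI impI)
  fix i j assume h: "i<j" "j<length (xs@[m])" "(xs@[m])!i < (xs@[m])!j"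
  show "Suc j = length (xs@[m])"
  proof (rule ccontr)
    assume "Suc j \<noteq> length (xs@[m])"
    hence "j < length xs" using h by simp
    hence "xs!i > xs!j" using sorted_wrt_nth_less[OF assms] h(1) by blast
    moreover have "(xs@[m])!i = xs!i" "(xs@[m])!j = xs!j" using h(1) \<open>j < length xs\<close> by (simp_all add: nth_append)
    ultimately show False using h(3) by simp
  qed
qed

lemma asc_E:
  fixes xs :: "nat list"
  assumes "sorted_wrt (>) xs" "\<forall>x\<in>set xs. x < a" "a < b"
  shows "\<forall>i j. i<j \<longrightarrow> j<length (a#b#xs) \<longrightarrow> (a#b#xs)!i < (a#b#xs)!j \<longrightarrow> i = 0 \<and> j = 1"
proof (intro allI impI)
  fix i j assume h: "i<j" "j<length (a#b#xs)" "(a#b#xs)!i < (a#b#xs)!j"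
  show "i = 0 \<and> j = 1"
  proof (cases j)
    case 0 thus ?thesis using h by simp
  next
    case (Suc j1)
    show ?thesis
    proof (cases j1)
      case 0 thus ?thesis using h Suc by simp
    next
      case (Suc j2)
      have j2: "j2 < length xs" using h \<open>j = Suc j1\<close> Suc by simp
      have jj: "j = Suc (Suc j2)" using \<open>j = Suc j1\<close> Suc by simp
      have xj: "(a#b#xs)!j = xs!j2" using jj by simp
      have "xs!j2 < a" using assms(2) j2 by auto
      show ?thesis
      proof (cases i)
        case 0 thus ?thesis using h \<open>xs!j2 < a\<close> by (simp add: jj)
      next
        case (Suc i1)
        show ?thesis
        proof (cases i1)
          case 0 thus ?thesis using h \<open>xs!j2 < a\<close> assms(3) \<open>i = Suc i1\<close> by (simp add: jj)
        next
          case (Suc i2)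
          have "i2 < j2" using h(1) \<open>i = Suc i1\<close> Suc \<open>j = Suc j1\<close> \<open>j1 = Suc j2\<close> by simp
          hence "xs!i2 > xs!j2" using sorted_wrt_nth_less[OF assms(1)] j2 by blast
          thus ?thesis using h \<open>i = Suc i1\<close> Suc by (simp add: jj)
        qed
      qed
    qed
  qed
qed

lemma Cons_in:
  assumes "\<sigma> \<in> Av n A" "\<forall>\<pi>\<in>A. \<exists>l. 0<l \<and> l<length \<pi> \<and> \<pi>!0<\<pi>!l"
  shows "Suc n # \<sigma> \<in> Av (Suc n) A"
proof -
  have p: "is_perm n \<sigma>" and av: "\<forall>\<pi>\<in>A. \<not> contains \<sigma> \<pi>" using assms(1) by (auto simp: Av_def avoids_def)
  have "is_perm (Suc n) (Suc n # \<sigma>)" using p unfolding is_perm_def by (auto simp: atLeastAtMostSuc_conv)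
  moreover have "\<forall>y\<in>set \<sigma>. y < Suc n" using p unfolding is_perm_def by auto
  ultimately show ?thesis using av assms(2) contains_Cons_max unfolding Av_def avoids_def by blast
qed

lemma contains_len: "contains \<sigma> \<pi> \<Longrightarrow> length \<pi> \<le> length \<sigma>"
proof -
  assume "contains \<sigma> \<pi>"
  then obtain "is" where h: "length is = length \<pi>" "sorted_wrt (<) is" "\<forall>i\<in>set is. i < length \<sigma>"
    unfolding contains_def by blast
  have "distinct is" using h(2) by (simp add: strict_sorted_iff)
  hence "length is = card (set is)" by (simp add: distinct_card)
  also have "\<dots> \<le> card {..<length \<sigma>}" using h(3) by (intro card_mono) auto
  finally show ?thesis using h(1) by simp
qed

lemma Av1: "Av 1 A = {[1]}" if "\<forall>\<pi>\<in>A. length \<pi> > 1"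
proof -
  have "is_perm 1 \<sigma> \<longleftrightarrow> \<sigma> = [1]" for \<sigma>
  proof
    assume "is_perm 1 \<sigma>"
    hence "length \<sigma> = 1" "set \<sigma> = {1}" unfolding is_perm_def by auto
    thus "\<sigma> = [1]" by (cases \<sigma>) auto
  qed (auto simp: is_perm_def)
  moreover have "\<not> contains [1] \<pi>" if "\<pi> \<in> A" for \<pi>
    using that \<open>\<forall>\<pi>\<in>A. length \<pi> > 1\<close> contains_len by fastforce
  ultimately show ?thesis unfolding Av_def avoids_def by auto
qed

lemma card_step:
  assumes "finite S" "card S = n" "D \<notin> Cons (Suc n) ` S"
  shows "finite (Cons (Suc n) ` S \<union> {D}) \<and> card (Cons (Suc n) ` S \<union> {D}) = Suc n"
proof -
  have "card (Cons (Suc n) ` S) = n" using assms(2) by (simp add: card_image)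
  thus ?thesis using assms by simp
qed

lemma perm_split:
  assumes "is_perm (Suc n) \<sigma>"
  obtains us vs where "\<sigma> = us @ Suc n # vs" "Suc n \<notin> set us" "Suc n \<notin> set vs"
    "distinct (us @ Suc n # vs)" "set \<sigma> = {1..Suc n}"
proof -
  have "Suc n \<in> set \<sigma>" using assms unfolding is_perm_def by auto
  then obtain us vs where "\<sigma> = us @ Suc n # vs" by (meson split_list)
  thus ?thesis using that assms unfolding is_perm_def by auto
qed

lemma lt_top: "set (us @ Suc n # vs) = {1..Suc n} \<Longrightarrow> Suc n \<notin> set us \<Longrightarrow> Suc n \<notin> set vs \<Longrightarrow> x \<in> set us \<or> x \<in> set vs \<Longrightarrow> x < Suc n \<and> 1 \<le> x"
proof -
  assume h: "set (us @ Suc n # vs) = {1..Suc n}" "Suc n \<notin> set us" "Suc n \<notin> set vs" "x \<in> set us \<or> x \<in> set vs"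
  hence "x \<in> set (us @ Suc n # vs)" by auto
  hence "x \<in> {1..Suc n}" unfolding h(1) .
  moreover have "x \<noteq> Suc n" using h(2-4) by auto
  ultimately show ?thesis by simp
qed

lemma part1_rec:
  assumes "n \<ge> 1"
  shows "Av (Suc n) {[1,2,3],[1,3,2],[2,3,1]} =
    Cons (Suc n) ` Av n {[1,2,3],[1,3,2],[2,3,1]} \<union> {rev [1..<Suc n] @ [Suc n]}"
  (is "Av (Suc n) ?A = _ \<union> {?D}")
proof
  show "Cons (Suc n) ` Av n ?A \<union> {?D} \<subseteq> Av (Suc n) ?A"
  proof (intro Un_least subsetI)
    fix \<sigma> assume "\<sigma> \<in> Cons (Suc n) ` Av n ?A"
    then obtain \<sigma>' where "\<sigma> = Suc n # \<sigma>'" "\<sigma>' \<in> Av n ?A" by auto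
    moreover have "\<forall>\<pi>\<in>?A. \<exists>l. 0<l \<and> l<length \<pi> \<and> \<pi>!0<\<pi>!l"
      by (auto intro!: exI[of _ 1])
    ultimately show "\<sigma> \<in> Av (Suc n) ?A" using Cons_in by blast
  next
    fix \<sigma> assume "\<sigma> \<in> {?D}"
    hence s: "\<sigma> = ?D" by simp
    have "is_perm (Suc n) ?D" unfolding is_perm_def by auto
    moreover have "\<forall>\<pi>\<in>?A. \<not> contains ?D \<pi>"
    proof
      fix \<pi> assume "\<pi> \<in> ?A"
      moreover have "\<not> contains ?D \<pi>" if "0 < (1::nat)" "Suc 1 < length \<pi>" "\<pi>!0 < \<pi>!1"
        using avoid1[OF asc_D[OF desc_sorted] that(1-3)] .
      ultimately show "\<not> contains ?D \<pi>" by auto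
    qed
    ultimately show "\<sigma> \<in> Av (Suc n) ?A" using s unfolding Av_def avoids_def by auto
  qed
next
  show "Av (Suc n) ?A \<subseteq> Cons (Suc n) ` Av n ?A \<union> {?D}"
  proof
    fix \<sigma> assume "\<sigma> \<in> Av (Suc n) ?A"
    hence p: "is_perm (Suc n) \<sigma>" and av: "\<forall>\<pi>\<in>?A. \<not> contains \<sigma> \<pi>"
      unfolding Av_def avoids_def by auto
    obtain us vs where sp: "\<sigma> = us @ Suc n # vs" "Suc n \<notin> set us" "Suc n \<notin> set vs"
      "distinct (us @ Suc n # vs)" "set \<sigma> = {1..Suc n}" using perm_split[OF p] by blast
    show "\<sigma> \<in> Cons (Suc n) ` Av n ?A \<union> {?D}"
    proof (cases "us = []")
      case True
      hence "\<sigma> = Suc n # vs" using sp by simp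
      moreover have "vs \<in> Av n ?A"
      proof -
        have "is_perm n vs" using p unfolding \<open>\<sigma> = Suc n # vs\<close> by (rule perm_Cons)
        moreover have "\<forall>\<pi>\<in>?A. \<not> contains vs \<pi>"
          using av contains_Cons[of vs _ "Suc n"] \<open>\<sigma> = Suc n # vs\<close> by blast
        ultimately show ?thesis by (simp add: Av_def avoids_def)
      qed
      ultimately show ?thesis by auto
    next
      case usne: False
      show ?thesis
      proof (cases "vs = []")
        case False
        define a where "a = us!0"
        define c where "c = vs!0"
        have aset: "a \<in> set us" using usne a_def by auto
        have cset: "c \<in> set vs" using False c_def by auto
        have "a \<in> set \<sigma>" "c \<in> set \<sigma>" using aset cset sp by auto
        hence "a \<le> Suc n" "c \<le> Suc n" using sp by auto
        moreover have "a \<noteq> Suc n" "c \<noteq> Suc n" using aset cset sp by auto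
        moreover have "a \<noteq> c" using aset cset sp(4) by auto
        moreover have "\<sigma>!0 = a" using sp usne a_def by (simp add: nth_append)
        moreover have "\<sigma>!(length us) = Suc n" using sp by simp
        moreover have "\<sigma>!(Suc (length us)) = c" using sp c_def by (simp add: nth_append)
        moreover have "0 < length us" "Suc (length us) < length \<sigma>" using usne False sp by auto
        ultimately have "contains \<sigma> [1,3,2] \<or> contains \<sigma> [2,3,1]"
          by (cases "a < c") (auto intro!: contains3[of 0 "length us" "Suc (length us)"])
        thus ?thesis using av by auto
      next
        case True
        have "sorted_wrt (>) us"
          unfolding sorted_wrt_iff_nth_less
        proof (intro allI impI)
          fix i j assume ij: "i < j" "j < length us"
          show "us!i > us!j"
          proof (rule ccontr)
            assume "\<not> us!i > us!j"
            moreover have "us!i \<noteq> us!j" using ij sp(4) by (auto simp: nth_eq_iff_index_eq)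
            ultimately have lt: "us!i < us!j" by simp
            have "us!j \<in> set us" using ij by auto
            hence "us!j \<in> set \<sigma>" using sp(1) by simp
            hence "us!j \<le> Suc n" using sp(5) by simp
            moreover have "us!j \<noteq> Suc n" using sp(2) \<open>us!j \<in> set us\<close> by auto
            ultimately have "us!j < Suc n" by simp
            have "contains \<sigma> [1,2,3]"
              apply (rule contains3[of i j "length us"])
              using ij lt \<open>us!j < Suc n\<close> sp True by (auto simp: nth_append)
            thus False using av by auto
          qed
        qed
        moreover have "set us = {1..n}"
        proof -
          have "set us = set \<sigma> - {Suc n}" using sp True by auto
          also have "\<dots> = {1..Suc n} - {Suc n}" using sp(5) by simp
          also have "\<dots> = {1..n}" by auto
          finally show ?thesis .
        qed
        ultimately have "us = rev [1..<Suc n]" by (rule sorted_desc_unique)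
        thus ?thesis using sp True by simp
      qed
    qed
  qed
qed


lemma part2_rec:
  assumes "n \<ge> 1"
  shows "Av (Suc n) ({[1,2,3],[1,3,2],[2,1,3]} \<union> {[3,4,1,2]}) =
    Cons (Suc n) ` Av n ({[1,2,3],[1,3,2],[2,1,3]} \<union> {[3,4,1,2]}) \<union> {n # Suc n # rev [1..<n]}"
  (is "Av (Suc n) ?A = _ \<union> {?E}")
proof
  show "Cons (Suc n) ` Av n ?A \<union> {?E} \<subseteq> Av (Suc n) ?A"
  proof (intro Un_least subsetI)
    fix \<sigma> assume "\<sigma> \<in> Cons (Suc n) ` Av n ?A"
    then obtain \<sigma>' where "\<sigma> = Suc n # \<sigma>'" "\<sigma>' \<in> Av n ?A" by auto
    moreover have "\<forall>\<pi>\<in>?A. \<exists>l. 0<l \<and> l<length \<pi> \<and> \<pi>!0<\<pi>!l"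
      by (auto intro: exI[of _ 1] exI[of _ 2])
    ultimately show "\<sigma> \<in> Av (Suc n) ?A" using Cons_in by blast
  next
    fix \<sigma> assume "\<sigma> \<in> {?E}"
    hence s: "\<sigma> = ?E" by simp
    have "set ?E = {1..Suc n}" using assms by auto
    hence "is_perm (Suc n) ?E" unfolding is_perm_def using assms by auto
    moreover have asc: "\<forall>i j. i<j \<longrightarrow> j<length ?E \<longrightarrow> ?E!i < ?E!j \<longrightarrow> i = 0 \<and> j = 1"
      by (rule asc_E) (auto simp: sorted_wrt_rev)
    have "\<forall>\<pi>\<in>?A. \<not> contains ?E \<pi>"
    proof
      fix \<pi> assume "\<pi> \<in> ?A"
      moreover have "\<not> contains ?E [1,2,3]" using avoid2[OF asc, of 0 1 _ 1 2] by simp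
      moreover have "\<not> contains ?E [1,3,2]" using avoid2[OF asc, of 0 1 _ 0 2] by simp
      moreover have "\<not> contains ?E [2,1,3]" using avoid2[OF asc, of 0 2 _ 1 2] by simp
      moreover have "\<not> contains ?E [3,4,1,2]" using avoid2[OF asc, of 0 1 _ 2 3] by simp
      ultimately show "\<not> contains ?E \<pi>" by auto
    qed
    ultimately show "\<sigma> \<in> Av (Suc n) ?A" using s unfolding Av_def avoids_def by auto
  qed
next
  show "Av (Suc n) ?A \<subseteq> Cons (Suc n) ` Av n ?A \<union> {?E}"
  proof
    fix \<sigma> assume "\<sigma> \<in> Av (Suc n) ?A"
    hence p: "is_perm (Suc n) \<sigma>" and av: "\<forall>\<pi>\<in>?A. \<not> contains \<sigma> \<pi>"
      unfolding Av_def avoids_def by auto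
    obtain us vs where sp: "\<sigma> = us @ Suc n # vs" "Suc n \<notin> set us" "Suc n \<notin> set vs"
      "distinct (us @ Suc n # vs)" "set \<sigma> = {1..Suc n}" using perm_split[OF p] by blast
    consider "us = []" | a where "us = [a]" | "length us \<ge> 2"
      by (cases us; cases "tl us") auto
    thus "\<sigma> \<in> Cons (Suc n) ` Av n ?A \<union> {?E}"
    proof cases
      case 1
      hence "\<sigma> = Suc n # vs" using sp by simp
      moreover have "vs \<in> Av n ?A"
      proof -
        have "is_perm n vs" using p unfolding \<open>\<sigma> = Suc n # vs\<close> by (rule perm_Cons)
        moreover have "\<forall>\<pi>\<in>?A. \<not> contains vs \<pi>"
          using av contains_Cons[of vs _ "Suc n"] \<open>\<sigma> = Suc n # vs\<close> by blast
        ultimately show ?thesis by (simp add: Av_def avoids_def)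
      qed
      ultimately show ?thesis by auto
    next
      case 3
      have l: "0 < length us" "1 < length us" using 3 by linarith+
      have "us!0 \<in> set us" by (rule nth_mem[OF l(1)])
      moreover have "us!1 \<in> set us" by (rule nth_mem[OF l(2)])
      ultimately have "us!0 < Suc n" "us!1 < Suc n" using lt_top[OF sp(5)[unfolded sp(1)] sp(2) sp(3)] by blast+
      moreover have "us!0 \<noteq> us!1"
      proof -
        have "distinct us" using sp(4) by simp
        thus ?thesis using nth_eq_iff_index_eq[of us 0 1] l by simp
      qed
      moreover have "\<sigma>!0 = us!0" "\<sigma>!1 = us!1" "\<sigma>!(length us) = Suc n" using sp 3 by (auto simp: nth_append)
      moreover have "length us < length \<sigma>" using sp by simp
      ultimately have "contains \<sigma> [1,2,3] \<or> contains \<sigma> [2,1,3]"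
        using 3 by (cases "us!0 < us!1") (auto intro!: contains3[of 0 1 "length us"])
      thus ?thesis using av by auto
    next
      case 2
      have s2: "\<sigma> = a # Suc n # vs" using sp 2 by simp
      have "a < Suc n" using lt_top[OF sp(5)[unfolded sp(1)] sp(2) sp(3), of a] 2 by simp
      hence a_le: "a \<le> n" by simp
      have vs_lt: "\<forall>x\<in>set vs. x < a"
      proof
        fix x assume "x \<in> set vs"
        then obtain k where k: "k < length vs" "x = vs!k" by (auto simp: in_set_conv_nth)
        show "x < a"
        proof (rule ccontr)
          assume "\<not> x < a"
          moreover have "x \<noteq> a" using sp(4) 2 \<open>x \<in> set vs\<close> by auto
          ultimately have "a < x" by simp
          moreover have "x < Suc n" using lt_top[OF sp(5)[unfolded sp(1)] sp(2) sp(3), of x] \<open>x \<in> set vs\<close> by blast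
          ultimately have "contains \<sigma> [1,3,2]"
            using s2 k a_le by (intro contains3[of 0 1 "Suc (Suc k)"]) auto
          thus False using av by auto
        qed
      qed
      have "n \<in> set \<sigma>" unfolding sp(5) using assms by simp
      hence "a = n" using s2 vs_lt a_le by auto
      have "sorted_wrt (>) vs"
        unfolding sorted_wrt_iff_nth_less
      proof (intro allI impI)
        fix i j assume ij: "i < j" "j < length vs"
        show "vs!i > vs!j"
        proof (rule ccontr)
          assume "\<not> vs!i > vs!j"
          moreover have "vs!i \<noteq> vs!j" using ij sp(4) by (auto simp: nth_eq_iff_index_eq)
          ultimately have lt: "vs!i < vs!j" by simp
          have "vs!i < a" "vs!j < a" using vs_lt ij by auto
          have "contains \<sigma> [3,4,1,2]"
            using s2 ij lt \<open>vs!i < a\<close> \<open>vs!j < a\<close> a_le by (intro contains4[of 0 1 "Suc (Suc i)" "Suc (Suc j)"]) auto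
          thus False using av by auto
        qed
      qed
      moreover have "set vs = {1..n-1}"
      proof -
        have "set vs = set \<sigma> - {a, Suc n}" using s2 sp(4) 2 by auto
        also have "\<dots> = {1..Suc n} - {n, Suc n}" using sp(5) \<open>a = n\<close> by simp
        also have "\<dots> = {1..n-1}" using assms by auto
        finally show ?thesis .
      qed
      ultimately have "vs = rev [1..<Suc (n-1)]" by (rule sorted_desc_unique)
      hence "vs = rev [1..<n]" using assms by simp
      thus ?thesis using s2 \<open>a = n\<close> by simp
    qed
  qed
qed

theorem theorem4p3:
  shows "(\<forall>n \<tau>. n \<ge> 1 \<longrightarrow> is_perm 4 \<tau> \<longrightarrow>
            (\<exists>\<pi>\<in>{[1,2,3],[1,3,2],[2,3,1]}. contains \<tau> \<pi>) \<longrightarrow>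
            card (Av n ({[1,2,3],[1,3,2],[2,3,1]} \<union> {\<tau>})) = n)
       \<and> (\<forall>n. n \<ge> 1 \<longrightarrow>
            card (Av n ({[1,2,3],[1,3,2],[2,1,3]} \<union> {[3,4,1,2]})) = n)"
proof (intro conjI allI impI)
  have c1: "finite (Av n {[1,2,3],[1,3,2],[2,3,1]}) \<and> card (Av n {[1,2,3],[1,3,2],[2,3,1]}) = n"
    if "n \<ge> 1" for n
    using that
  proof (induction n rule: nat_induct_at_least)
    case base
    have "Av 1 {[1,2,3],[1,3,2],[2,3,1]} = {[1]}" by (rule Av1) auto
    thus ?case by simp
  next
    case (Suc n)
    have "hd (rev [1..<Suc n] @ [Suc n]) = n" using Suc.hyps by simp
    hence "rev [1..<Suc n] @ [Suc n] \<notin> Cons (Suc n) ` Av n {[1,2,3],[1,3,2],[2,3,1]}" by auto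
    thus ?case using part1_rec[OF Suc.hyps] card_step Suc.IH by simp
  qed
  fix n :: nat and \<tau> :: "nat list"
  assume n: "n \<ge> 1" and "is_perm 4 \<tau>" and ex: "\<exists>\<pi>\<in>{[1,2,3],[1,3,2],[2,3,1]}. contains \<tau> \<pi>"
  have "Av n ({[1,2,3],[1,3,2],[2,3,1]} \<union> {\<tau>}) = Av n {[1,2,3],[1,3,2],[2,3,1]}"
    unfolding Av_def avoids_def using ex contains_trans by blast
  thus "card (Av n ({[1,2,3],[1,3,2],[2,3,1]} \<union> {\<tau>})) = n" using c1[OF n] by simp
next
  fix n :: nat assume n: "n \<ge> 1"
  have "finite (Av n ({[1,2,3],[1,3,2],[2,1,3]} \<union> {[3,4,1,2]})) \<and> card (Av n ({[1,2,3],[1,3,2],[2,1,3]} \<union> {[3,4,1,2]})) = n"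
    using n
  proof (induction n rule: nat_induct_at_least)
    case base
    have "Av 1 ({[1,2,3],[1,3,2],[2,1,3]} \<union> {[3,4,1,2]}) = {[1]}" by (rule Av1) auto
    thus ?case by simp
  next
    case (Suc n)
    have "n # Suc n # rev [1..<n] \<notin> Cons (Suc n) ` Av n ({[1,2,3],[1,3,2],[2,1,3]} \<union> {[3,4,1,2]})" by auto
    thus ?case using part2_rec[OF Suc.hyps] card_step Suc.IH by simp
  qed
  thus "card (Av n ({[1,2,3],[1,3,2],[2,1,3]} \<union> {[3,4,1,2]})) = n" by simp
qed

end
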